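(* Let $h\in C^2([0,\infty))$ with $h'(r)\ge 0$, let $R>0$ and let $B(R)\subset\mathbb{R}^m$ be the ball of radius $R$ centered at the origin. Then $\sigma_1(B(R);\gamma_h)\le \frac1R$.
   Context: $d\gamma_h=e^{h(|x|)}\,dx$. $\sigma_1(B(R);\gamma_h)$ is the first nonzero eigenvalue of the weighted Steklov problem $-\Delta u-\nabla h\cdot\nabla u=0$ in $B(R)$, $\partial u/\partial\nu=\sigma u$ on $\partial B(R)$ (here $h$ means $h(|x|)$), characterized by $\sigma_1(B(R);\gamma_h)=\inf\{\frac{\int_{B(R)}|\nabla u|^2\,d\gamma_h}{\int_{\partial B(R)}u^2e^{h(|x|)}\,dA}: u\in W^{1,2}(B(R))\setminus\{0\},\ \int_{\partial B(R)}u\,e^{h(|x|)}\,dA=0\}$, with $dA$ the surface measure. *)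

theory Defs
  imports "HOL-Analysis.Analysis"
begin

text \<open>Surface integral over the sphere of radius R centred at 0 in a Euclidean space
  of dimension m = DIM('a), via the standard cone (polar-coordinate) formula:
  the integral over the sphere of f dA equals (m/R) times the integral over the ball B(R)
  of f(R x / |x|) dx.  For spheres this cone measure coincides with the surface measure.\<close>
definition sphere_integral :: "real \<Rightarrow> ('a::euclidean_space \<Rightarrow> real) \<Rightarrow> real" where
  "sphere_integral R f =
     (real DIM('a) / R) * integral (ball 0 R) (\<lambda>x. f (scaleR (R / norm x) x))"

text \<open>Admissible test functions: C^1 functions u near the closed ball with gradient G,
  weighted boundary mean zero, and nonzero boundary trace (functions with zero trace
  have Rayleigh quotient +infinity and do not affect the infimum).\<close>
definition steklov_admissible ::
  "(real \<Rightarrow> real) \<Rightarrow> real \<Rightarrow> ('a::euclidean_space \<Rightarrow> real) \<Rightarrow> ('a \<Rightarrow> 'a) \<Rightarrow> bool" where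
  "steklov_admissible h R u G \<longleftrightarrow>
     (\<forall>x\<in>cball 0 R. (u has_derivative (\<lambda>v. G x \<bullet> v)) (at x)) \<and>
     continuous_on (cball 0 R) G \<and>
     sphere_integral R (\<lambda>x. u x * exp (h (norm x))) = 0 \<and>
     sphere_integral R (\<lambda>x. (u x)\<^sup>2 * exp (h (norm x))) \<noteq> 0"

definition steklov_quotient ::
  "(real \<Rightarrow> real) \<Rightarrow> real \<Rightarrow> ('a::euclidean_space \<Rightarrow> real) \<Rightarrow> ('a \<Rightarrow> 'a) \<Rightarrow> real" where
  "steklov_quotient h R u G =
     integral (ball 0 R) (\<lambda>x. (norm (G x))\<^sup>2 * exp (h (norm x))) /
     sphere_integral R (\<lambda>x. (u x)\<^sup>2 * exp (h (norm x)))"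

text \<open>First nonzero weighted Steklov eigenvalue sigma_1(B(R); gamma_h) on the ball of
  radius R in the space 'a (the type argument fixes the dimension).\<close>
definition sigma1 :: "('a::euclidean_space) itself \<Rightarrow> (real \<Rightarrow> real) \<Rightarrow> real \<Rightarrow> real" where
  "sigma1 _ h R = Inf {steklov_quotient h R u G | (u :: 'a \<Rightarrow> real) G.
                          steklov_admissible h R u G}"

end

theory Submission
  imports Defs
begin

lemma odd_integral_ball:
  fixes g :: "'a::euclidean_space \<Rightarrow> real"
  assumes odd: "\<And>x. g (-x) = - g x"
  shows "integral (ball 0 R) g = 0"
proof -
  obtain a :: 'a where a: "ball 0 R \<subseteq> cbox (-a) a"
    using bounded_subset_cbox_symmetric[of "ball (0::'a) R"] by auto
  define F where "F x = (if x \<in> ball 0 R then g x else 0)" for x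
  have I: "integral (ball 0 R) g = integral (cbox (-a) a) F"
    unfolding F_def using integral_restrict_Int[of "cbox (-a) a" "ball 0 R" g] a
    by (simp add: Int_absorb2)
  have Fodd: "F (-x) = - F x" for x
    unfolding F_def using odd by (auto simp: dist_norm)
  have "integral (cbox (-a) (-(-a))) (\<lambda>x. F (-x)) = integral (cbox (-a) a) F"
    by (rule integral_reflect)
  then have "- integral (cbox (-a) a) F = integral (cbox (-a) a) F"
    by (simp add: Fodd)
  then show ?thesis using I by simp
qed

lemma vol_pos: "R > 0 \<Longrightarrow> integral (ball (0::'a::euclidean_space) R) (\<lambda>x. 1::real) > 0"
  using lmeasure_integral[of "ball (0::'a) R"] measure_completion[of "ball (0::'a) R" lborel] content_ball_pos[of R "0::'a"]
  by simp

lemma f_integrable: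
  fixes b :: "'a::euclidean_space"
  assumes b: "b \<in> Basis"
  shows "(\<lambda>x::'a. (b \<bullet> x)\<^sup>2 / (norm x)\<^sup>2) integrable_on ball 0 R"
proof -
  have "(\<lambda>x::'a. (b \<bullet> x)\<^sup>2 / (norm x)\<^sup>2) integrable_on (ball 0 R - {0})"
  proof (rule measurable_bounded_by_integrable_imp_integrable)
    show "(\<lambda>x::'a. (b \<bullet> x)\<^sup>2 / (norm x)\<^sup>2) \<in> borel_measurable (lebesgue_on (ball 0 R - {0}))"
      apply (rule continuous_imp_measurable_on_sets_lebesgue)
       apply (intro continuous_intros) apply auto
      done
    show "(\<lambda>x. 1::real) integrable_on (ball 0 R - {0})"
      by (rule integrable_on_const) (auto intro: fmeasurable_Diff)
    show "ball 0 R - {0::'a} \<in> sets lebesgue" by auto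
    fix x :: 'a
    have "\<bar>b \<bullet> x\<bar> \<le> norm x" using Basis_le_norm[OF b, of x] by (simp add: inner_commute)
    then have "(b \<bullet> x)\<^sup>2 \<le> (norm x)\<^sup>2"
      by (metis abs_ge_zero power2_abs power_mono)
    then show "norm ((b \<bullet> x)\<^sup>2 / (norm x)\<^sup>2) \<le> 1"
      by (cases "x = 0") (auto simp: divide_le_eq_1)
  qed
  then show ?thesis
    by (rule integrable_spike_set) (auto intro: negligible_subset[of "{0}"])
qed

lemma integral_nonneg':
  fixes f :: "'a::euclidean_space \<Rightarrow> real"
  assumes "\<And>x. x \<in> S \<Longrightarrow> 0 \<le> f x"
  shows "0 \<le> integral S f"
  using assms integral_nonneg[of f S] not_integrable_integral[of f S] by (cases "f integrable_on S") auto

theorem proposition2p1: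
  fixes h :: "real \<Rightarrow> real" and R :: real
  assumes "\<exists>h1 h2. (\<forall>r\<ge>0. (h has_real_derivative h1 r) (at r within {0..})) \<and>
                   (\<forall>r\<ge>0. (h1 has_real_derivative h2 r) (at r within {0..})) \<and>
                   continuous_on {0..} h2 \<and>
                   (\<forall>r\<ge>0. h1 r \<ge> 0)"
    and "R > 0"
  shows "sigma1 TYPE('a::euclidean_space) h R \<le> 1 / R"
proof -
  obtain h1 where hd: "\<And>r. r \<ge> 0 \<Longrightarrow> (h has_real_derivative h1 r) (at r within {0..})"
    and h1: "\<And>r. r \<ge> 0 \<Longrightarrow> h1 r \<ge> 0"
    using assms(1) by blast
  have R: "R > 0" by fact
  have hcont: "continuous_on {0..} h"
    using hd DERIV_continuous continuous_on_eq_continuous_within by fastforce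
  have hmono: "h r \<le> h R" if "0 \<le> r" "r \<le> R" for r
  proof (rule DERIV_nonneg_imp_increasing_open[OF \<open>r \<le> R\<close>])
    fix x assume x: "r < x" "x < R"
    then have "x \<in> interior {0..}" using \<open>0 \<le> r\<close> by auto
    then have "at x within {0..} = at x" by (rule at_within_interior)
    then show "\<exists>y. (h has_real_derivative y) (at x) \<and> 0 \<le> y"
      using hd[of x] h1[of x] x \<open>0 \<le> r\<close> by auto
  next
    show "continuous_on {r..R} h"
      using hcont by (rule continuous_on_subset) (use \<open>0 \<le> r\<close> in auto)
  qed
  define B where "B = ball (0::'a) R"
  define V where "V = integral B (\<lambda>x. 1::real)"
  define m where "m = real DIM('a)"
  define E where "E = exp (h R)"
  define I where "I b = integral B (\<lambda>x::'a. (b \<bullet> x)\<^sup>2 / (norm x)\<^sup>2)" for b :: 'a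
  have Vpos: "V > 0" unfolding V_def B_def using vol_pos R by blast
  have mpos: "m > 0" unfolding m_def by simp
  have Epos: "E > 0" unfolding E_def by simp
  have sumI: "(\<Sum>b\<in>Basis. I b) = V"
  proof -
    have "(\<Sum>b\<in>Basis. I b) = integral B (\<lambda>x::'a. \<Sum>b\<in>Basis. (b \<bullet> x)\<^sup>2 / (norm x)\<^sup>2)"
      unfolding I_def B_def by (rule integral_sum[symmetric]) (auto intro: f_integrable)
    also have "\<dots> = integral B (\<lambda>x. 1)"
    proof (rule integral_spike[of "{0}"])
      show "negligible {0::'a}" by simp
      fix x :: 'a assume "x \<in> B - {0}"
      then have x: "x \<noteq> 0" by auto
      have e: "(\<Sum>b\<in>Basis. (b \<bullet> x)\<^sup>2) = (norm x)\<^sup>2"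
        by (simp only: power2_norm_eq_inner euclidean_inner[of x x]) (simp add: power2_eq_square inner_commute)
      have "(\<Sum>b\<in>Basis. (b \<bullet> x)\<^sup>2 / (norm x)\<^sup>2) = (\<Sum>b\<in>Basis. (b \<bullet> x)\<^sup>2) / (norm x)\<^sup>2"
        by (simp add: sum_divide_distrib)
      then show "1 = (\<Sum>b\<in>Basis. (b \<bullet> x)\<^sup>2 / (norm x)\<^sup>2)" using x e by simp
    qed
    finally show ?thesis unfolding V_def .
  qed
  have "Max (I ` Basis) \<in> I ` Basis" by (intro Max_in) auto
  then obtain b :: 'a where b: "b \<in> Basis" and bM: "I b = Max (I ` Basis)" by (metis imageE)
  have bmax: "I c \<le> I b" if "c \<in> Basis" for c
    unfolding bM using that by (intro Max_ge) auto
  have "V \<le> m * I b"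
    unfolding sumI[symmetric] m_def using sum_bounded_above[of Basis I "I b"] bmax by auto
  then have mIb: "V \<le> m * I b" .
  have Ibpos: "I b > 0" using mIb Vpos mpos by (smt (verit) mult_nonpos_nonneg mult_nonneg_nonpos)
  define u where "u = (\<lambda>x::'a. b \<bullet> x)"
  define G where "G = (\<lambda>x::'a. b)"
  have mean: "sphere_integral R (\<lambda>x. u x * exp (h (norm x))) = 0"
    unfolding sphere_integral_def
  proof -
    have "integral (ball 0 R) (\<lambda>x::'a. u ((R / norm x) *\<^sub>R x) * exp (h (norm ((R / norm x) *\<^sub>R x)))) = 0"
      by (rule odd_integral_ball) (simp add: u_def)
    then show "real DIM('a) / R * integral (ball 0 R) (\<lambda>x::'a. u ((R / norm x) *\<^sub>R x) * exp (h (norm ((R / norm x) *\<^sub>R x)))) = 0"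
      by simp
  qed
  have den: "sphere_integral R (\<lambda>x. (u x)\<^sup>2 * exp (h (norm x))) = m * R * E * I b"
  proof -
    have "integral (ball 0 R) (\<lambda>x::'a. (u ((R / norm x) *\<^sub>R x))\<^sup>2 * exp (h (norm ((R / norm x) *\<^sub>R x))))
        = integral (ball 0 R) (\<lambda>x::'a. (R\<^sup>2 * E) * ((b \<bullet> x)\<^sup>2 / (norm x)\<^sup>2))"
    proof (rule integral_cong)
      fix x :: 'a
      show "(u ((R / norm x) *\<^sub>R x))\<^sup>2 * exp (h (norm ((R / norm x) *\<^sub>R x))) = (R\<^sup>2 * E) * ((b \<bullet> x)\<^sup>2 / (norm x)\<^sup>2)"
      proof (cases "x = 0")
        case True then show ?thesis by (simp add: u_def)
      next
        case False
        have n: "norm ((R / norm x) *\<^sub>R x) = R" using False R by simp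
        show ?thesis unfolding n using False
          by (simp add: u_def E_def power_divide power_mult_distrib field_simps)
      qed
    qed
    also have "\<dots> = (R\<^sup>2 * E) * I b"
      unfolding I_def B_def by (rule integral_mult_right)
    finally have "integral (ball 0 R) (\<lambda>x::'a. (u ((R / norm x) *\<^sub>R x))\<^sup>2 * exp (h (norm ((R / norm x) *\<^sub>R x)))) = (R\<^sup>2 * E) * I b" .
    then show ?thesis
      unfolding sphere_integral_def m_def using R
      by (simp add: power2_eq_square)
  qed
  have adm: "steklov_admissible h R u G"
    unfolding steklov_admissible_def
  proof (intro conjI ballI)
    fix x :: 'a
    show "(u has_derivative (\<lambda>v. G x \<bullet> v)) (at x)"
      unfolding u_def G_def by (intro derivative_eq_intros) auto
  next
    show "continuous_on (cball 0 R) G" unfolding G_def by simp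
  next
    show "sphere_integral R (\<lambda>x. u x * exp (h (norm x))) = 0" by (rule mean)
  next
    show "sphere_integral R (\<lambda>x. (u x)\<^sup>2 * exp (h (norm x))) \<noteq> 0"
      unfolding den using mpos R Epos Ibpos by simp
  qed
  have num: "integral (ball 0 R) (\<lambda>x::'a. (norm (G x))\<^sup>2 * exp (h (norm x))) \<le> E * V"
  proof -
    have eq: "integral (ball 0 R) (\<lambda>x::'a. (norm (G x))\<^sup>2 * exp (h (norm x))) = integral B (\<lambda>x. exp (h (norm x)))"
      unfolding G_def B_def using b by simp
    show ?thesis
    proof (cases "(\<lambda>x. exp (h (norm x))) integrable_on B")
      case True
      have "integral B (\<lambda>x. exp (h (norm x))) \<le> integral B (\<lambda>x. E * 1)"
      proof (rule integral_le[OF True])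
        show "(\<lambda>x. E * 1) integrable_on B" unfolding B_def by (rule integrable_on_const) auto
        fix x assume "x \<in> B"
        then have "norm x \<le> R" unfolding B_def by simp
        then show "exp (h (norm x)) \<le> E * 1" unfolding E_def using hmono[of "norm x"] by simp
      qed
      also have "\<dots> = E * V" unfolding V_def by (rule integral_mult_right)
      finally show ?thesis using eq by simp
    next
      case False
      then show ?thesis using eq Epos Vpos not_integrable_integral by fastforce
    qed
  qed
  have Q: "steklov_quotient h R u G \<le> 1 / R"
  proof -
    have "steklov_quotient h R u G = integral (ball 0 R) (\<lambda>x::'a. (norm (G x))\<^sup>2 * exp (h (norm x))) / (m * R * E * I b)"
      unfolding steklov_quotient_def den ..
    also have "\<dots> \<le> (E * V) / (m * R * E * I b)"
      using num mpos R Epos Ibpos by (intro divide_right_mono) auto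
    also have "\<dots> \<le> 1 / R"
      using mIb mpos R Epos Ibpos by (simp add: field_simps)
    finally show ?thesis .
  qed
  let ?S = "{steklov_quotient h R u G | (u :: 'a \<Rightarrow> real) G. steklov_admissible h R u G}"
  have mem: "steklov_quotient h R u G \<in> ?S" using adm by blast
  have bdd: "bdd_below ?S"
  proof (rule bdd_belowI[of _ 0])
    fix q assume "q \<in> ?S"
    then obtain u' :: "'a \<Rightarrow> real" and G' where q: "q = steklov_quotient h R u' G'" by blast
    have n: "integral (ball 0 R) (\<lambda>x::'a. (norm (G' x))\<^sup>2 * exp (h (norm x))) \<ge> 0"
      by (rule integral_nonneg') simp
    have d: "integral (ball 0 R) (\<lambda>x::'a. (u' ((R / norm x) *\<^sub>R x))\<^sup>2 * exp (h (norm ((R / norm x) *\<^sub>R x)))) \<ge> 0"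
      by (rule integral_nonneg') simp
    show "0 \<le> q" unfolding q steklov_quotient_def sphere_integral_def
      using n d R by (intro divide_nonneg_nonneg mult_nonneg_nonneg) auto
  qed
  show ?thesis
    unfolding sigma1_def using cInf_lower[OF mem bdd] Q by linarith
qed

end
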